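(* Let $p$ be a prime greater than $3$ and let $t$ be an indeterminate. Then $$P_{[p/3]}(t)\equiv\sum_{k=0}^{[p/3]}\frac{(3k)!}{k!^3}\Big(\frac{1-t}{54}\Big)^k\pmod p.$$
   Context: $P_n(x)$ denotes the $n$-th Legendre polynomial, defined by $\frac1{\sqrt{1-2xt+t^2}}=\sum_{n\ge0}P_n(x)t^n$; equivalently $P_n(x)=\frac1{2^n}\sum_{k=0}^{[n/2]}\frac{(-1)^k(2n-2k)!}{k!(n-k)!(n-2k)!}x^{n-2k}$. $[x]$ is the greatest integer not exceeding $x$. A congruence between polynomials with rational coefficients having denominators prime to $p$ means coefficientwise congruence modulo $p$. *)

theory Defs
  imports "HOL-Computational_Algebra.Polynomial" "HOL-Computational_Algebra.Primes"
begin

definition legendreP :: "nat \<Rightarrow> rat poly" where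
  "legendreP n = (\<Sum>k = 0..n div 2.
      monom ((-1) ^ k * fact (2*n - 2*k) /
             (2 ^ n * fact k * fact (n - k) * fact (n - 2*k))) (n - 2*k))"

definition p_integral :: "nat \<Rightarrow> rat \<Rightarrow> bool" where
  "p_integral p q \<longleftrightarrow> (\<exists>a b. q = of_int a / of_int b \<and> \<not> int p dvd b)"

definition rat_cong :: "nat \<Rightarrow> rat \<Rightarrow> rat \<Rightarrow> bool" where
  "rat_cong p x y \<longleftrightarrow> p_integral p x \<and> p_integral p y \<and>
     (\<exists>a b. x - y = of_int a / of_int b \<and> \<not> int p dvd b \<and> int p dvd a)"

definition poly_cong :: "nat \<Rightarrow> rat poly \<Rightarrow> rat poly \<Rightarrow> bool" where
  "poly_cong p f g \<longleftrightarrow> (\<forall>i. rat_cong p (coeff f i) (coeff g i))"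

end

theory Submission imports Defs begin


lemma pd_monom:
  "(pderiv ^^ j) (monom (c::rat) m) = (if j \<le> m then monom (c * fact m / fact (m - j)) (m - j) else 0)"
proof (induction j)
  case 0 then show ?case by simp
next
  case (Suc j)
  show ?case
  proof (cases "Suc j \<le> m")
    case True
    then have e: "m - j = Suc (m - Suc j)" by simp
    have "(fact (m - j) :: rat) = of_nat (m - j) * fact (m - Suc j)" by (simp only: e fact_Suc of_nat_Suc)
    then show ?thesis using Suc True e by (simp add: pderiv_monom field_simps del: of_nat_Suc)
  next
    case False
    then show ?thesis using Suc by (auto simp: pderiv_monom)
  qed
qed

lemma pd_lin_pow:
  "(pderiv ^^ j) ([:-1,1:]^m :: rat poly) = (if j \<le> m then smult (fact m / fact (m-j)) ([:-1,1:]^(m-j)) else 0)"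
proof (induction j)
  case 0 then show ?case by simp
next
  case (Suc j)
  show ?case
  proof (cases "Suc j \<le> m")
    case True
    then have e: "m - j = Suc (m - Suc j)" by simp
    have "(fact (m - j) :: rat) = of_nat (m - j) * fact (m - Suc j)" by (simp only: e fact_Suc of_nat_Suc)
    moreover have "pderiv ([:-1,1:]^(m-j) :: rat poly) = smult (of_nat (m-j)) ([:-1,1:]^(m - Suc j))"
      unfolding e pderiv_power_Suc by (simp add: pderiv_pCons)
    moreover have "fact m / fact (m-j) * of_nat (m-j) = (fact m / fact (m - Suc j) :: rat)"
      using calculation(1) True by (simp add: divide_simps)
    ultimately show ?thesis using Suc True by (simp add: pderiv_smult del: of_nat_Suc)
  next
    case False
    then show ?thesis using Suc by (auto simp: pderiv_power pderiv_pCons)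
  qed
qed



lemma t1: "[:-1,0,1:] = (-1) + monom (1::rat) 2"
  by (rule poly_eqI) (simp add: coeff_monom numeral_2_eq_2 coeff_pCons split: nat.splits)

lemma t0: "(-1::rat poly)^k = [:(-1)^k:]"
  by (induct k) simp_all

lemma t2: "(of_nat c * (-1)^k * monom 1 2 ^ (n-k) :: rat poly) = monom (of_nat c * (-1)^k) (2*(n-k))"
  by (simp add: monom_power t0 of_nat_poly smult_monom)



lemma smult_sum_r: "smult c (sum f A) = (\<Sum>x\<in>A. smult c (f x))"
  by (induction A rule: infinite_finite_induct) (simp_all add: smult_add_right)

lemma partA1: "smult (1/(2^n * fact n)) ((pderiv^^n) ([:-1,0,1:]^n :: rat poly)) = legendreP n"
proof -
  have E: "([:-1,0,1:]::rat poly)^n = (\<Sum>k\<le>n. monom (of_nat (n choose k) * (-1)^k) (2*(n-k)))"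
    unfolding t1 binomial_ring by (simp add: t2)
  have "smult (1/(2^n * fact n)) ((pderiv^^n) ([:-1,0,1:]^n :: rat poly)) =
     (\<Sum>k\<le>n. if n \<le> 2*(n-k) then monom (1/(2^n * fact n) * (of_nat (n choose k) * (-1)^k * fact (2*(n-k)) / fact (2*(n-k)-n))) (2*(n-k)-n) else 0)"
    unfolding E higher_pderiv_sum pd_monom smult_sum_r
    by (rule sum.cong) (simp_all add: smult_monom)
  also have "\<dots> = (\<Sum>k\<in>{k\<in>{..n}. n \<le> 2*(n-k)}. monom (1/(2^n * fact n) * (of_nat (n choose k) * (-1)^k * fact (2*(n-k)) / fact (2*(n-k)-n))) (2*(n-k)-n))"
    by (subst sum.inter_filter) auto
  also have "{k\<in>{..n}. n \<le> 2*(n-k)} = {0..n div 2}" by auto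
  also have "(\<Sum>k\<in>{0..n div 2}. monom (1/(2^n * fact n) * (of_nat (n choose k) * (-1)^k * fact (2*(n-k)) / fact (2*(n-k)-n))) (2*(n-k)-n)) = legendreP n"
    unfolding legendreP_def
  proof (rule sum.cong[OF refl])
    fix k assume k: "k \<in> {0..n div 2}"
    then have kn: "k \<le> n" by auto
    have a: "2*(n-k)-n = n - 2*k" "2*(n-k) = 2*n-2*k" using k by auto
    show "monom ((1::rat)/(2^n * fact n) * (of_nat (n choose k) * (-1)^k * fact (2*(n-k)) / fact (2*(n-k)-n))) (2*(n-k)-n) =
       monom ((-1) ^ k * fact (2*n - 2*k) / (2 ^ n * fact k * fact (n - k) * fact (n - 2*k))) (n - 2*k)"
      unfolding a binomial_fact[OF kn] by (simp add: field_simps)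
  qed
  finally show ?thesis .
qed



lemma partA2: "smult (1/(2^n * fact n)) ((pderiv^^n) ([:-1,0,1:]^n :: rat poly)) =
   (\<Sum>j\<in>{0..n}. smult (of_nat ((n choose j) * ((n+j) choose j))) ([:-1/2,1/2:]^j))"
proof -
  have f: "[:-1,0,1:] = [:-1,1:] * ([:-1,1:] + [:2:] :: rat poly)" by simp
  have t: "(of_nat c * [:-1,1:]^j * [:2:]^(n-j) :: rat poly) = smult (of_nat c * 2^(n-j)) ([:-1,1:]^j)" for c j
    by (simp add: of_nat_poly poly_const_pow mult.commute)
  have E: "([:-1,0,1:]::rat poly)^n = (\<Sum>j\<le>n. smult (of_nat (n choose j) * 2^(n-j)) ([:-1,1:]^(n+j)))"
    unfolding f power_mult_distrib binomial_ring sum_distrib_left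
    by (rule sum.cong) (simp_all only: t, simp add: power_add mult_smult_right)
  have "smult (1/(2^n * fact n)) ((pderiv^^n) ([:-1,0,1:]^n :: rat poly)) =
      (\<Sum>j\<le>n. smult (1/(2^n * fact n) * (of_nat (n choose j) * 2^(n-j)) * (fact (n+j) / fact j)) ([:-1,1:]^j))"
    unfolding E higher_pderiv_sum higher_pderiv_smult pd_lin_pow smult_sum_r
    by (rule sum.cong) (simp_all add: mult_ac)
  also have "\<dots> = (\<Sum>j\<in>{0..n}. smult (of_nat ((n choose j) * ((n+j) choose j))) ([:-1/2,1/2:]^j))"
    unfolding atLeast0AtMost
  proof (rule sum.cong[OF refl])
    fix j assume "j \<in> {..n}"
    then have jn: "j \<le> n" by auto
    have h: "[:-1/2,1/2:] = smult (1/2) [:-1,1::rat:]" by simp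
    have p: "(2::rat)^(n-j) = 2^n / 2^j" using jn by (simp add: power_diff)
    have b: "(of_nat ((n+j) choose j) :: rat) = fact (n+j) / (fact j * fact n)"
      using binomial_fact[of j "n+j"] by simp
    show "smult (1/(2^n * fact n) * (of_nat (n choose j) * 2^(n-j)) * (fact (n+j) / fact j)) ([:-1,1:]^j) =
       smult (of_nat ((n choose j) * ((n+j) choose j))) ([:-1/2,1/2::rat:]^j)"
      unfolding h smult_power p of_nat_mult b by (simp add: field_simps)
  qed
  finally show ?thesis .
qed



definition pdv :: "nat \<Rightarrow> rat \<Rightarrow> bool" where
  "pdv p q \<longleftrightarrow> (\<exists>a b. q = of_int a / of_int b \<and> \<not> int p dvd b \<and> int p dvd a)"

lemma ndvd_mult: "prime p \<Longrightarrow> \<not> int p dvd b \<Longrightarrow> \<not> int p dvd d \<Longrightarrow> \<not> int p dvd (b*d)"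
  by (simp add: prime_dvd_mult_iff)

lemma pint_int: "prime p \<Longrightarrow> p_integral p (of_int a)"
  unfolding p_integral_def
  by (rule exI[of _ a], rule exI[of _ 1]) (auto simp: prime_gt_1_nat)

lemma pint_add: assumes "prime p" "p_integral p x" "p_integral p y" shows "p_integral p (x+y)"
proof -
  obtain a b c d where x: "x = of_int a / of_int b" "\<not> int p dvd b" and y: "y = of_int c / of_int d" "\<not> int p dvd d"
    using assms unfolding p_integral_def by blast
  have "b \<noteq> 0" "d \<noteq> 0" using x y by auto
  then have "x + y = of_int (a*d + c*b) / of_int (b*d)" using x y by (simp add: field_simps)
  then show ?thesis unfolding p_integral_def using ndvd_mult[OF assms(1) x(2) y(2)] by blast
qed

lemma pint_mult: assumes "prime p" "p_integral p x" "p_integral p y" shows "p_integral p (x*y)"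
proof -
  obtain a b c d where x: "x = of_int a / of_int b" "\<not> int p dvd b" and y: "y = of_int c / of_int d" "\<not> int p dvd d"
    using assms unfolding p_integral_def by blast
  then have "x * y = of_int (a*c) / of_int (b*d)" by simp
  then show ?thesis unfolding p_integral_def using ndvd_mult[OF assms(1) x(2) y(2)] by blast
qed

lemma pint_uminus: assumes "p_integral p x" shows "p_integral p (-x)"
proof -
  obtain a b where x: "x = of_int a / of_int b" "\<not> int p dvd b"
    using assms unfolding p_integral_def by blast
  then have "-x = of_int (-a) / of_int b" by simp
  then show ?thesis unfolding p_integral_def using x by blast
qed

lemma pint_sum: "prime p \<Longrightarrow> (\<And>x. x \<in> A \<Longrightarrow> p_integral p (f x)) \<Longrightarrow> p_integral p (sum f A)"
  by (induction A rule: infinite_finite_induct) (auto intro: pint_add pint_int[where a=0, simplified])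

lemma pdv_pint: "pdv p x \<Longrightarrow> p_integral p x"
  unfolding pdv_def p_integral_def by blast

lemma pdv_add: assumes "prime p" "pdv p x" "pdv p y" shows "pdv p (x+y)"
proof -
  obtain a b c d where x: "x = of_int a / of_int b" "\<not> int p dvd b" "int p dvd a" and y: "y = of_int c / of_int d" "\<not> int p dvd d" "int p dvd c"
    using assms unfolding pdv_def by blast
  have "b \<noteq> 0" "d \<noteq> 0" using x y by auto
  then have "x + y = of_int (a*d + c*b) / of_int (b*d)" using x y by (simp add: field_simps)
  moreover have "int p dvd (a*d + c*b)" using x y by simp
  ultimately show ?thesis unfolding pdv_def using ndvd_mult[OF assms(1) x(2) y(2)] by blast
qed

lemma pdv_mult: assumes "prime p" "pdv p x" "p_integral p y" shows "pdv p (x*y)"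
proof -
  obtain a b c d where x: "x = of_int a / of_int b" "\<not> int p dvd b" "int p dvd a" and y: "y = of_int c / of_int d" "\<not> int p dvd d"
    using assms unfolding pdv_def p_integral_def by blast
  then have "x * y = of_int (a*c) / of_int (b*d)" by simp
  moreover have "int p dvd (a*c)" using x by simp
  ultimately show ?thesis unfolding pdv_def using ndvd_mult[OF assms(1) x(2) y(2)] by blast
qed

lemma pdv_0: "prime p \<Longrightarrow> pdv p 0"
  unfolding pdv_def by (rule exI[of _ 0], rule exI[of _ 1]) (auto simp: prime_gt_1_nat)

lemma pdv_sum: "prime p \<Longrightarrow> (\<And>x. x \<in> A \<Longrightarrow> pdv p (f x)) \<Longrightarrow> pdv p (sum f A)"
proof (induction A rule: infinite_finite_induct)
  case (infinite A)
  then show ?case using pdv_0 by simp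
next
  case empty
  then show ?case using pdv_0 by simp
next
  case (insert x F)
  then show ?case by (auto intro: pdv_add)
qed

lemma not_dvd_54: assumes "prime p" "p > 3" shows "\<not> int p dvd 54"
proof
  assume "int p dvd 54"
  then have "p dvd 54" by (simp add: int_dvd_int_iff[symmetric])
  then have "p dvd 2 * 3^3" by simp
  then have "p dvd 2 \<or> p dvd 3" using assms(1) by (metis prime_dvd_mult_iff prime_dvd_power)
  then show False using assms(2) by (auto dest: dvd_imp_le)
qed

lemma pint_coeff_q: assumes "prime p" "p > 3"
  shows "p_integral p (coeff ([:1/54,-1/54:]^k) i)"
proof (induction k arbitrary: i)
  case 0
  then show ?case using pint_int[OF assms(1), of 1] pint_int[OF assms(1), of 0] by (auto simp: coeff_1)
next
  case (Suc k)
  have c: "p_integral p (coeff [:1/54,-1/54::rat:] j)" for j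
  proof -
    have "p_integral p (of_int 1 / of_int 54)" "p_integral p (of_int (-1) / of_int 54)"
      unfolding p_integral_def using not_dvd_54[OF assms] by blast+
    then show ?thesis using pint_int[OF assms(1), of 0]
      by (cases j; cases "j - 1") (auto simp: coeff_pCons)
  qed
  show ?case unfolding power_Suc coeff_mult
    by (rule pint_sum[OF assms(1)], rule pint_mult[OF assms(1)], rule c, rule Suc)
qed



definition FF :: "nat \<Rightarrow> nat \<Rightarrow> int" where
  "FF n k = (-27)^k * (\<Prod>i<k. (int n - int i)) * (\<Prod>i<k. (int n + int i + 1)) * (\<Prod>i<k. int i + 1)"

lemma FF_Suc: "FF n (Suc k) = FF n k * ((-27) * (int n - int k) * (int n + int k + 1) * (int k + 1))"
  unfolding FF_def prod.lessThan_Suc power_Suc by (simp add: algebra_simps)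

lemma FF_cong:
  assumes "int p = 3 * int n + 1 \<or> int p = 3 * int n + 2"
  shows "int p dvd (FF n k - fact (3*k))"
proof (induction k)
  case 0 then show ?case by (simp add: FF_def)
next
  case (Suc k)
  define X where "X = (-27) * (int n - int k) * (int n + int k + 1) * (int k + 1)"
  define Y where "Y = (3*int k + 1) * (3 * int k + 2) * (3 * int k + 3)"
  have f: "(fact (3 * Suc k) :: int) = fact (3*k) * Y"
  proof -
    have e: "3 * Suc k = Suc (Suc (Suc (3*k)))" by simp
    show ?thesis unfolding e fact_Suc Y_def by (simp add: algebra_simps)
  qed
  have "X - Y = - (3*int k + 3) * ((3 * int n + 1) * (3 * int n + 2))"
    unfolding X_def Y_def by (simp add: algebra_simps)
  then have d: "int p dvd (X - Y)" using assms by auto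
  have "FF n (Suc k) - fact (3 * Suc k) = (FF n k - fact (3*k)) * X + fact (3*k) * (X - Y)"
    unfolding FF_Suc f X_def by (simp add: algebra_simps)
  then show ?case using Suc d by simp
qed

lemma P1: "k \<le> n \<Longrightarrow> (of_int (\<Prod>i<k. (int n - int i)) :: rat) = fact n / fact (n - k)"
proof (induction k)
  case 0 then show ?case by simp
next
  case (Suc k)
  then have e: "n - k = Suc (n - Suc k)" by simp
  have f: "(fact (n - k) :: rat) = of_nat (n - k) * fact (n - Suc k)" by (simp only: e fact_Suc of_nat_Suc)
  have "(of_int (\<Prod>i<Suc k. (int n - int i)) :: rat) = of_int (\<Prod>i<k. (int n - int i)) * of_nat (n - k)"
    using Suc by (simp add: of_nat_diff)
  also have "\<dots> = fact n / fact (n - k) * of_nat (n - k)" using Suc by simp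
  also have "\<dots> = fact n / fact (n - Suc k)" unfolding f using Suc by (simp add: field_simps)
  finally show ?case .
qed

lemma P2: "(of_int (\<Prod>i<k. (int n + int i + 1)) :: rat) = fact (n + k) / fact n"
proof (induction k)
  case 0 then show ?case by simp
next
  case (Suc k)
  have f: "(fact (n + Suc k) :: rat) = (of_nat n + of_nat k + 1) * fact (n + k)" by (simp add: algebra_simps)
  have "(of_int (\<Prod>i<Suc k. (int n + int i + 1)) :: rat) = of_int (\<Prod>i<k. (int n + int i + 1)) * (of_nat n + of_nat k + 1)"
    by simp
  also have "\<dots> = fact (n+k) / fact n * (of_nat n + of_nat k + 1)" using Suc by simp
  also have "\<dots> = fact (n + Suc k) / fact n" unfolding f by simp
  finally show ?case .
qed

lemma P3: "(of_int (\<Prod>i<k. (int i + 1)) :: rat) = fact k"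
  by (induction k) (simp_all add: field_simps)

lemma FF_rat: assumes "k \<le> n"
  shows "(of_int (FF n k) :: rat) = fact k ^ 3 * (of_nat ((n choose k) * ((n+k) choose k)) * (-27)^k)"
proof -
  have b: "(of_nat ((n+k) choose k) :: rat) = fact (n+k) / (fact k * fact n)"
    using binomial_fact[of k "n+k"] by simp
  show ?thesis unfolding FF_def of_int_mult P1[OF assms] P2 P3 of_nat_mult b binomial_fact[OF assms]
    by (simp add: field_simps power3_eq_cube)
qed



theorem lemma2p3:
  fixes p :: nat
  assumes "prime p" and "p > 3"
  shows "poly_cong p (legendreP (p div 3))
           (\<Sum>k = 0..p div 3. smult (fact (3*k) / (fact k) ^ 3) ([:1/54, -1/54:] ^ k))"
proof -
  define n where "n = p div 3"
  define q :: "rat poly" where "q = [:1/54, -1/54:]"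
  define cb :: "nat \<Rightarrow> rat" where "cb k = of_nat ((n choose k) * ((n+k) choose k)) * (-27)^k" for k
  define ca :: "nat \<Rightarrow> rat" where "ca k = fact (3*k) / (fact k) ^ 3" for k
  have pr: "prime p" by fact
  have "p mod 3 \<noteq> 0"
  proof
    assume "p mod 3 = 0"
    then have "3 dvd p" by auto
    then show False using pr assms(2) by (auto simp: prime_nat_iff)
  qed
  then have pn: "int p = 3 * int n + 1 \<or> int p = 3 * int n + 2" unfolding n_def by presburger
  have np: "n < p" unfolding n_def using assms(2) by simp
  have L: "legendreP n = (\<Sum>k\<in>{0..n}. smult (cb k) (q^k))"
  proof -
    have h: "[:-1/2,1/2::rat:] = smult (-27) q" unfolding q_def by simp
    show ?thesis unfolding partA1[symmetric] partA2 h smult_power smult_smult cb_def by simp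
  qed
  have bint: "p_integral p (cb k)" for k
  proof -
    have "cb k = of_int (int ((n choose k) * ((n+k) choose k)) * (-27)^k)" unfolding cb_def by simp
    then show ?thesis using pint_int[OF pr, of "int ((n choose k) * ((n+k) choose k)) * (-27)^k"] by argo
  qed
  have bad: "pdv p (cb k - ca k)" if k: "k \<le> n" for k
  proof -
    have nd: "\<not> int p dvd (fact k ^ 3)"
    proof
      assume "int p dvd (fact k ^ 3)"
      then have "int p dvd int (fact k ^ 3)" by (simp add: of_nat_fact)
      then have "p dvd fact k ^ 3" by (simp only: int_dvd_int_iff)
      then have "p dvd fact k" using pr prime_dvd_power by blast
      then have "p \<le> k" using pr prime_dvd_fact_iff by blast
      then show False using k np by simp
    qed
    have "(fact k :: rat) \<noteq> 0" by simp
    then have "cb k - ca k = of_int (FF n k - fact (3*k)) / of_int (fact k ^ 3)"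
      unfolding of_int_diff FF_rat[OF k] ca_def by (simp add: field_simps cb_def)
    then show ?thesis unfolding pdv_def using nd FF_cong[OF pn] by blast
  qed
  have aint: "p_integral p (ca k)" if "k \<le> n" for k
  proof -
    have "ca k = cb k + - (cb k - ca k)" by simp
    then show ?thesis using pint_add[OF pr bint[of k] pint_uminus[OF pdv_pint[OF bad[OF that]]]] by simp
  qed
  show ?thesis
    unfolding poly_cong_def rat_cong_def n_def[symmetric] L q_def[symmetric] ca_def[symmetric]
  proof (intro allI conjI)
    fix i
    have c: "p_integral p (coeff (q^k) i)" for k unfolding q_def by (rule pint_coeff_q[OF assms])
    show "p_integral p (coeff (\<Sum>k = 0..n. smult (cb k) (q ^ k)) i)"
      unfolding coeff_sum coeff_smult by (rule pint_sum[OF pr]) (rule pint_mult[OF pr bint c])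
    show "p_integral p (coeff (\<Sum>k = 0..n. smult (ca k) (q ^ k)) i)"
      unfolding coeff_sum coeff_smult by (rule pint_sum[OF pr]) (rule pint_mult[OF pr aint c], simp)
    have "coeff (\<Sum>k = 0..n. smult (cb k) (q ^ k)) i - coeff (\<Sum>k = 0..n. smult (ca k) (q ^ k)) i
       = (\<Sum>k = 0..n. (cb k - ca k) * coeff (q^k) i)"
      unfolding coeff_sum coeff_smult sum_subtractf[symmetric] left_diff_distrib ..
    moreover have "pdv p (\<Sum>k = 0..n. (cb k - ca k) * coeff (q^k) i)"
      by (rule pdv_sum[OF pr]) (rule pdv_mult[OF pr bad c], simp)
    ultimately show "\<exists>a b. coeff (\<Sum>k = 0..n. smult (cb k) (q ^ k)) i - coeff (\<Sum>k = 0..n. smult (ca k) (q ^ k)) i =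
          rat_of_int a / rat_of_int b \<and> \<not> int p dvd b \<and> int p dvd a"
      unfolding pdv_def by simp
  qed
qed

end
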